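(* Let $\mathcal{A}:\mathbb{C}^{m\times n}\to\mathbb{C}^p$ be linear with rank-restricted isometry constant $\delta_r(\mathcal{A})$. Let $X,Y\in\mathbb{C}^{m\times n}$ satisfy $\langle X,Y\rangle=\mathrm{tr}(Y^HX)=0$ and $\mathrm{rank}(X+\alpha Y)\le r$ for all $\alpha\in\mathbb{C}$. Then $|\langle\mathcal{A}X,\mathcal{A}Y\rangle|\le\sqrt2\,\delta_r(\mathcal{A})\|X\|_F\|Y\|_F$, where $\langle u,v\rangle=v^Hu$ on $\mathbb{C}^p$.
   Context: $\|\cdot\|_F$ is the Frobenius norm and $\|\cdot\|_2$ the Euclidean norm. $\delta_r(\mathcal{A})$ is the smallest $\delta\ge0$ such that $(1-\delta)\|X\|_F^2\le\|\mathcal{A}X\|_2^2\le(1+\delta)\|X\|_F^2$ for all $X$ with $\mathrm{rank}(X)\le r$. *)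

theory Defs
  imports "HOL-Analysis.Analysis"
begin

text \<open>Complex m x n matrices are rendered as \<open>complex^'n^'m\<close> (rows indexed by 'm,
  columns by 'n); vectors of \<open>\<complex>^p\<close> as \<open>complex^'p\<close>.  The rank is the library's
  \<open>rank\<close> (dimension of the row space over the scalar field, here \<complex>).\<close>

definition cmat_scale :: "complex \<Rightarrow> complex^'n^'m \<Rightarrow> complex^'n^'m" where
  "cmat_scale c X = (\<chi> i j. c * X $ i $ j)"

definition clinear_map :: "(complex^'n^'m \<Rightarrow> complex^'p) \<Rightarrow> bool" where
  "clinear_map A \<longleftrightarrow>
     (\<forall>X Y. A (X + Y) = A X + A Y) \<and> (\<forall>c X. A (cmat_scale c X) = c *s A X)"

definition cadj :: "complex^'n^'m \<Rightarrow> complex^'m^'n" where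
  "cadj Y = (\<chi> j i. cnj (Y $ i $ j))"

definition mat_inner :: "complex^'n^'m \<Rightarrow> complex^'n^'m \<Rightarrow> complex" where
  "mat_inner X Y = trace (cadj Y ** X)"

definition vec_inner :: "complex^'p \<Rightarrow> complex^'p \<Rightarrow> complex" where
  "vec_inner u v = (\<Sum>k\<in>UNIV. cnj (v $ k) * u $ k)"

definition frob_norm :: "complex^'n^'m \<Rightarrow> real" where
  "frob_norm X = sqrt (\<Sum>i\<in>UNIV. \<Sum>j\<in>UNIV. (cmod (X $ i $ j))\<^sup>2)"

definition vec_norm :: "complex^'p \<Rightarrow> real" where
  "vec_norm u = sqrt (\<Sum>k\<in>UNIV. (cmod (u $ k))\<^sup>2)"

definition rip_const :: "nat \<Rightarrow> (complex^'n^'m \<Rightarrow> complex^'p) \<Rightarrow> real" where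
  "rip_const r A = Inf {\<delta>. \<delta> \<ge> 0 \<and> (\<forall>X::complex^'n^'m. rank X \<le> r \<longrightarrow>
       (1 - \<delta>) * (frob_norm X)\<^sup>2 \<le> (vec_norm (A X))\<^sup>2 \<and>
       (vec_norm (A X))\<^sup>2 \<le> (1 + \<delta>) * (frob_norm X)\<^sup>2)}"

end

theory Submission
  imports Defs
begin

lemma vec_norm_eq: "vec_norm (u::complex^'p) = norm u"
  by (simp add: vec_norm_def norm_vec_def L2_set_def)

lemma frob_norm_eq: "frob_norm (X::complex^'n^'m) = norm X"
  by (simp add: frob_norm_def norm_vec_def L2_set_def sum_nonneg)

lemma Re_vec_inner: "Re (vec_inner (u::complex^'p) v) = inner u v"
  by (simp add: vec_inner_def inner_vec_def inner_complex_def Re_sum mult.commute)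

lemma mat_inner_alt: "mat_inner (X::complex^'n^'m) Y = (\<Sum>i\<in>UNIV. \<Sum>j\<in>UNIV. cnj (Y$i$j) * X$i$j)"
  unfolding mat_inner_def trace_def cadj_def matrix_matrix_mult_def
  by (simp add: sum.swap[of _ "UNIV::'m set"])

lemma Re_mat_inner: "Re (mat_inner (X::complex^'n^'m) Y) = inner X Y"
  by (simp add: mat_inner_alt inner_vec_def inner_complex_def Re_sum mult.commute)

lemma mat_inner_scale: "mat_inner (X::complex^'n^'m) (cmat_scale c Y) = cnj c * mat_inner X Y"
  by (simp add: mat_inner_alt cmat_scale_def sum_distrib_left mult.assoc)

lemma vec_inner_scale: "vec_inner (u::complex^'p) (c *s v) = cnj c * vec_inner u v"
  by (simp add: vec_inner_def sum_distrib_left mult.assoc)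

lemma norm_cmat_scale: "norm (cmat_scale c (X::complex^'n^'m)) = cmod c * norm X"
proof -
  have "frob_norm (cmat_scale c X) = sqrt ((cmod c)^2 * (\<Sum>i\<in>UNIV. \<Sum>j\<in>UNIV. (cmod (X $ i $ j))\<^sup>2))"
    by (simp add: frob_norm_def cmat_scale_def norm_mult power_mult_distrib sum_distrib_left)
  also have "\<dots> = cmod c * frob_norm X" by (simp add: frob_norm_def real_sqrt_mult)
  finally show ?thesis by (simp add: frob_norm_eq)
qed

lemma clinear_add: "clinear_map A \<Longrightarrow> A (X + Y) = A X + A Y"
  by (simp add: clinear_map_def)
lemma clinear_scale: "clinear_map A \<Longrightarrow> A (cmat_scale c X) = c *s A X"
  by (simp add: clinear_map_def)

lemma clinear_linear:
  fixes A :: "complex^'n^'m \<Rightarrow> complex^'p"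
  assumes "clinear_map A" shows "linear A"
proof
  fix x y show "A (x + y) = A x + A y" using assms by (simp add: clinear_map_def)
next
  fix r :: real and x :: "complex^'n^'m"
  have "r *\<^sub>R x = cmat_scale (of_real r) x"
    unfolding cmat_scale_def by (rule iffD2[OF vec_eq_iff], rule allI, rule iffD2[OF vec_eq_iff], rule allI) (simp only: vector_scaleR_component vec_lambda_beta scaleR_conv_of_real[where 'a=complex])
  then have "A (r *\<^sub>R x) = of_real r *s A x" using assms by (simp add: clinear_map_def)
  moreover have "of_real r *s A x = r *\<^sub>R A x"
    by (rule iffD2[OF vec_eq_iff], rule allI) (simp only: vector_scaleR_component vector_smult_component scaleR_conv_of_real[where 'a=complex])
  ultimately show "A (r *\<^sub>R x) = r *\<^sub>R A x" by simp
qed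

lemma rip_nonempty:
  fixes A :: "complex^'n^'m \<Rightarrow> complex^'p"
  assumes "clinear_map A"
  shows "{\<delta>. \<delta> \<ge> 0 \<and> (\<forall>X::complex^'n^'m. rank X \<le> r \<longrightarrow>
       (1 - \<delta>) * (frob_norm X)\<^sup>2 \<le> (vec_norm (A X))\<^sup>2 \<and>
       (vec_norm (A X))\<^sup>2 \<le> (1 + \<delta>) * (frob_norm X)\<^sup>2)} \<noteq> {}"
proof -
  have "bounded_linear A" using clinear_linear[OF assms] linear_conv_bounded_linear by blast
  then obtain K where K: "\<And>x. norm (A x) \<le> norm x * K" "K > 0"
    using bounded_linear.pos_bounded by blast
  have "1 + K^2 \<in> {\<delta>. \<delta> \<ge> 0 \<and> (\<forall>X::complex^'n^'m. rank X \<le> r \<longrightarrow>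
       (1 - \<delta>) * (frob_norm X)\<^sup>2 \<le> (vec_norm (A X))\<^sup>2 \<and>
       (vec_norm (A X))\<^sup>2 \<le> (1 + \<delta>) * (frob_norm X)\<^sup>2)}"
  proof (safe)
    show "0 \<le> 1 + K^2" by simp
  next
    fix X :: "complex^'n^'m"
    show "(1 - (1 + K\<^sup>2)) * (frob_norm X)\<^sup>2 \<le> (vec_norm (A X))\<^sup>2"
    proof -
      have "0 \<le> K^2 * (frob_norm X)\<^sup>2" by simp
      moreover have "(1 - (1 + K^2)) * (frob_norm X)\<^sup>2 = - (K^2 * (frob_norm X)\<^sup>2)" by (simp add: algebra_simps)
      ultimately show ?thesis using zero_le_power2[of "vec_norm (A X)"] by linarith
    qed
    have "(norm (A X))^2 \<le> (norm X * K)^2" using K(1)[of X] by (simp add: power_mono)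
    also have "\<dots> \<le> (1 + (1 + K^2)) * (norm X)^2" by (simp add: power_mult_distrib algebra_simps)
    finally show "(vec_norm (A X))\<^sup>2 \<le> (1 + (1 + K\<^sup>2)) * (frob_norm X)\<^sup>2"
      by (simp add: vec_norm_eq frob_norm_eq)
  qed
  then show ?thesis by blast
qed

lemma polar: "(norm (u + v))\<^sup>2 - (norm (u - v))\<^sup>2 = 4 * inner u (v::'a::real_inner)"
  by (simp add: power2_norm_eq_inner inner_add_left inner_add_right inner_diff_left inner_diff_right inner_commute algebra_simps)

lemma core:
  fixes A :: "complex^'n^'m \<Rightarrow> complex^'p"
    and X Y :: "complex^'n^'m"
  assumes lin: "clinear_map A"
    and orth: "mat_inner X Y = 0"
    and rk: "\<forall>\<alpha>::complex. rank (X + cmat_scale \<alpha> Y) \<le> r"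
    and dpos: "\<delta> \<ge> 0"
    and dS: "\<forall>Z::complex^'n^'m. rank Z \<le> r \<longrightarrow>
       (1 - \<delta>) * (frob_norm Z)\<^sup>2 \<le> (vec_norm (A Z))\<^sup>2 \<and>
       (vec_norm (A Z))\<^sup>2 \<le> (1 + \<delta>) * (frob_norm Z)\<^sup>2"
  shows "cmod (vec_inner (A X) (A Y)) \<le> \<delta> * frob_norm X * frob_norm Y"
proof -
  have A0: "A 0 = 0" using linear_0[OF clinear_linear[OF lin]] .
  define z where "z = vec_inner (A X) (A Y)"
  define fX where "fX = norm X"
  define fY where "fY = norm Y"
  have nn: "0 \<le> \<delta> * frob_norm X * frob_norm Y" using dpos by (simp add: frob_norm_eq)
  show ?thesis
  proof (cases "z = 0 \<or> fX = 0 \<or> fY = 0")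
    case True
    then have "z = 0" using A0 by (auto simp: z_def fX_def fY_def vec_inner_def)
    then show ?thesis using nn by (simp add: z_def)
  next
    case False
    then have z0: "z \<noteq> 0" and fXp: "fX > 0" and fYp: "fY > 0" by (auto simp: fX_def fY_def)
    define c where "c = z / of_real (cmod z)"
    define t where "t = fX / fY"
    define \<beta> where "\<beta> = of_real t * c"
    define W where "W = cmat_scale \<beta> Y"
    have cc: "cmod c = 1" using z0 by (simp add: c_def norm_divide)
    have tp: "t > 0" using fXp fYp by (simp add: t_def)
    have nb: "cmod \<beta> = t" using cc tp by (simp add: \<beta>_def norm_mult)
    have nW: "norm W = fX" using nb fYp
      by (simp add: W_def norm_cmat_scale fY_def[symmetric] t_def)
    have iXW: "inner X W = 0"
      using Re_mat_inner[of X W] by (simp add: W_def mat_inner_scale orth)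
    have n1: "(norm (X + W))\<^sup>2 = 2 * fX^2"
      using dot_norm[of X W] iXW nW by (simp add: fX_def)
    have n2: "(norm (X - W))\<^sup>2 = 2 * fX^2"
      using dot_norm_neg[of X W] iXW nW by (simp add: fX_def)
    have XmW: "X - W = X + cmat_scale (- \<beta>) Y"
      by (simp add: W_def cmat_scale_def vec_eq_iff)
    have AW: "A W = \<beta> *s A Y" using lin by (simp add: W_def clinear_scale)
    have AXp: "A (X + W) = A X + A W" using lin by (simp add: clinear_add)
    have "A (X - W) = A X + (- \<beta>) *s A Y" unfolding XmW
      using lin by (simp add: clinear_add clinear_scale)
    then have AXm: "A (X - W) = A X - A W" by (simp add: AW vec_eq_iff)
    have "inner (A X) (A W) = Re (cnj \<beta> * z)"
      using Re_vec_inner[of "A X" "A W"] by (simp add: AW vec_inner_scale z_def)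
    also have "cnj \<beta> * z = of_real t * (cnj z * z / of_real (cmod z))"
      by (simp add: \<beta>_def c_def)
    also have "cnj z * z / of_real (cmod z) = of_real (cmod z)"
      using z0 by (simp add: complex_norm_square[symmetric] power2_eq_square mult.commute)
    finally have iA: "inner (A X) (A W) = t * cmod z" by simp
    have up: "(norm (A (X + W)))\<^sup>2 \<le> (1 + \<delta>) * (2 * fX^2)"
    proof -
      have "rank (X + W) \<le> r" using rk by (simp add: W_def)
      from dS[rule_format, OF this] show ?thesis using n1 by (simp add: vec_norm_eq frob_norm_eq)
    qed
    have lo: "(1 - \<delta>) * (2 * fX^2) \<le> (norm (A (X - W)))\<^sup>2"
    proof -
      have "rank (X - W) \<le> r" using rk by (simp add: XmW)
      from dS[rule_format, OF this] show ?thesis using n2 by (simp add: vec_norm_eq frob_norm_eq)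
    qed
    have "4 * (t * cmod z) = (norm (A (X + W)))\<^sup>2 - (norm (A (X - W)))\<^sup>2"
      using polar[of "A X" "A W"] iA AXp AXm by simp
    also have "\<dots> \<le> (1 + \<delta>) * (2 * fX^2) - (1 - \<delta>) * (2 * fX^2)" using up lo by linarith
    also have "\<dots> = 4 * (\<delta> * fX^2)" by (simp add: algebra_simps)
    finally have h: "t * cmod z \<le> \<delta> * fX^2" by linarith
    have e1: "t * cmod z * fY = fX * cmod z" using fYp by (simp add: t_def)
    have e2: "\<delta> * fX^2 * fY = fX * (\<delta> * fX * fY)" by (simp add: power2_eq_square)
    have e3: "t * cmod z * fY \<le> \<delta> * fX^2 * fY" using mult_right_mono[OF h, of fY] fYp by simp
    have "fX * cmod z \<le> fX * (\<delta> * fX * fY)" using e3 unfolding e1 e2 .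
    then have "cmod z \<le> \<delta> * fX * fY" using fXp by simp
    then show ?thesis by (simp add: z_def fX_def fY_def frob_norm_eq)
  qed
qed


theorem proposition5:
  fixes A :: "complex^'n^'m \<Rightarrow> complex^'p"
    and X Y :: "complex^'n^'m"
    and r :: nat
  assumes "clinear_map A"
    and "mat_inner X Y = 0"
    and "\<forall>\<alpha>::complex. rank (X + cmat_scale \<alpha> Y) \<le> r"
  shows "cmod (vec_inner (A X) (A Y)) \<le> sqrt 2 * rip_const r A * frob_norm X * frob_norm Y"
proof -
  define S where "S = {\<delta>. \<delta> \<ge> 0 \<and> (\<forall>X::complex^'n^'m. rank X \<le> r \<longrightarrow>
       (1 - \<delta>) * (frob_norm X)\<^sup>2 \<le> (vec_norm (A X))\<^sup>2 \<and>
       (vec_norm (A X))\<^sup>2 \<le> (1 + \<delta>) * (frob_norm X)\<^sup>2)}"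
  have Sne: "S \<noteq> {}" unfolding S_def by (rule rip_nonempty[OF assms(1)])
  have R: "rip_const r A = Inf S" by (simp add: rip_const_def S_def)
  define z where "z = cmod (vec_inner (A X) (A Y))"
  have bnd: "z \<le> \<delta> * frob_norm X * frob_norm Y" if "\<delta> \<in> S" for \<delta>
    using core[OF assms, of \<delta>] that by (simp add: S_def z_def)
  have fX: "frob_norm X \<ge> 0" and fY: "frob_norm Y \<ge> 0" by (simp_all add: frob_norm_eq)
  show ?thesis
  proof (cases "frob_norm X * frob_norm Y = 0")
    case True
    obtain d where "d \<in> S" using Sne by blast
    from bnd[OF this] True have "z \<le> 0" by (simp add: mult.assoc)
    then have "z = 0" by (simp add: z_def)
    moreover have "sqrt 2 * rip_const r A * frob_norm X * frob_norm Y = 0"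
      using True by (simp add: mult.assoc)
    ultimately show ?thesis unfolding z_def by linarith
  next
    case False
    then have P: "frob_norm X * frob_norm Y > 0" using fX fY by simp
    have "z / (frob_norm X * frob_norm Y) \<le> Inf S"
    proof (rule cInf_greatest[OF Sne])
      fix d assume "d \<in> S"
      from bnd[OF this] show "z / (frob_norm X * frob_norm Y) \<le> d" using P
        by (simp add: divide_le_eq mult.assoc)
    qed
    then have h: "z \<le> Inf S * (frob_norm X * frob_norm Y)" using P by (simp add: divide_le_eq)
    have z0: "z \<ge> 0" by (simp add: z_def)
    have "Inf S * (frob_norm X * frob_norm Y) \<le> sqrt 2 * (Inf S * (frob_norm X * frob_norm Y))"
    proof -
      have q: "0 \<le> Inf S * (frob_norm X * frob_norm Y)" using h z0 by linarith
      have "(1::real) \<le> sqrt 2" by simp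
      from mult_right_mono[OF this q] show ?thesis by simp
    qed
    then show ?thesis using h by (simp add: z_def R mult.assoc)
  qed
qed

end
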